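(* Let $\mathbf{NeurRing}$ be the category whose objects are neural rings and whose morphisms are monomial maps, and let $\mathbf{Code}$ be the category of codes with morphisms of codes. The assignment $R$ sending a code $\mathcal{C}$ to its neural ring $R_{\mathcal{C}}$, and a morphism $f:\mathcal{C}\to\mathcal{D}$ to the ring homomorphism $f^*:R_{\mathcal{D}}\to R_{\mathcal{C}}$, $f^*(p)=p\circ f$ (regarding elements of neural rings as functions on codewords), is a contravariant equivalence of categories $\mathbf{Code}\to\mathbf{NeurRing}$.
   Context: A code is a subset $\mathcal{C}\subseteq 2^{[n]}$; in $\mathbf{Code}$, two codes that are equal as sets of subsets (e.g. $\mathcal{C}\subseteq 2^{[n]}$ regarded also as a subset of $2^{[m]}$, $m\ge n$) are the same object. For $\sigma\subseteq[n]$, $\mathrm{Tk}_{\mathcal{C}}(\sigma)=\{c\in\mathcal{C}\mid\sigma\subseteq c\}$; a trunk in $\mathcal{C}$ is a subset that is empty or of this form. A morphism of codes $f:\mathcal{C}\to\mathcal{D}$ is a function such that preimages of trunks in $\mathcal{D}$ are trunks in $\mathcal{C}$. A polynomial $p\in\mathbb{F}_2[x_1,\dots,x_n]$ defines a function $2^{[n]}\to\mathbb{F}_2$ by setting $x_i=1$ if $i\in c$ and $x_i=0$ otherwise. The vanishing ideal of $\mathcal{C}\subseteq 2^{[n]}$ is $I_{\mathcal{C}}=\{p\in\mathbb{F}_2[x_1,\dots,x_n]\mid p(c)=0\ \forall c\in\mathcal{C}\}$, and the neural ring is $R_{\mathcal{C}}=\mathbb{F}_2[x_1,\dots,x_n]/I_{\mathcal{C}}$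 together with its coordinate functions $x_1,\dots,x_n$; it is identified with the ring of functions $\mathcal{C}\to\mathbb{F}_2$. If $R_{\mathcal{C}}$, $R_{\mathcal{D}}$ have coordinates $x_1,\dots,x_n$ and $y_1,\dots,y_m$, a monomial map $R_{\mathcal{C}}\to R_{\mathcal{D}}$ is a ring homomorphism $\phi$ such that for every monomial $p$ in the $x_i$, $\phi(p)$ is either $0$ or a monomial in the $y_j$. *)

theory Defs
  imports Main "HOL-Library.Z2"
begin

text \<open>A code: a set of codewords, each a subset of [n] = {1..n} for some n.
  Codes equal as sets of subsets are the same object.\<close>
definition is_code :: "nat set set \<Rightarrow> bool" where
  "is_code C \<longleftrightarrow> (\<exists>n. \<forall>c\<in>C. c \<subseteq> {1..n})"

definition Tk :: "nat set set \<Rightarrow> nat set \<Rightarrow> nat set set" where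
  "Tk C \<sigma> = {c \<in> C. \<sigma> \<subseteq> c}"

definition is_trunk :: "nat set set \<Rightarrow> nat set set \<Rightarrow> bool" where
  "is_trunk C T \<longleftrightarrow> T = {} \<or> (\<exists>\<sigma>. finite \<sigma> \<and> T = Tk C \<sigma>)"

text \<open>Morphism of codes f : C -> D (as a function, relevant only on C).\<close>
definition code_morphism :: "nat set set \<Rightarrow> nat set set \<Rightarrow> (nat set \<Rightarrow> nat set) \<Rightarrow> bool" where
  "code_morphism C D f \<longleftrightarrow> (\<forall>c\<in>C. f c \<in> D) \<and>
     (\<forall>T. is_trunk D T \<longrightarrow> is_trunk C {c \<in> C. f c \<in> T})"

text \<open>Neural ring R_C, identified with the ring of functions C -> F_2
  (functions extended by 0 outside C), with pointwise operations.\<close>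
definition neural_ring :: "nat set set \<Rightarrow> (nat set \<Rightarrow> bit) set" where
  "neural_ring C = {p. \<forall>c. c \<notin> C \<longrightarrow> p c = 0}"

definition nr_one :: "nat set set \<Rightarrow> nat set \<Rightarrow> bit" where
  "nr_one C = (\<lambda>c. if c \<in> C then 1 else 0)"

definition coord :: "nat set set \<Rightarrow> nat \<Rightarrow> nat set \<Rightarrow> bit" where
  "coord C i = (\<lambda>c. if c \<in> C \<and> i \<in> c then 1 else 0)"

definition monomial :: "nat set set \<Rightarrow> nat set \<Rightarrow> nat set \<Rightarrow> bit" where
  "monomial C \<sigma> = (\<lambda>c. if c \<in> C then (\<Prod>i\<in>\<sigma>. coord C i c) else 0)"

definition is_monomial :: "nat set set \<Rightarrow> (nat set \<Rightarrow> bit) \<Rightarrow> bool" where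
  "is_monomial C p \<longleftrightarrow> (\<exists>\<sigma>. finite \<sigma> \<and> (\<forall>i\<in>\<sigma>. 1 \<le> i) \<and> p = monomial C \<sigma>)"

definition ring_hom_nr :: "nat set set \<Rightarrow> nat set set \<Rightarrow> ((nat set \<Rightarrow> bit) \<Rightarrow> (nat set \<Rightarrow> bit)) \<Rightarrow> bool" where
  "ring_hom_nr D C \<phi> \<longleftrightarrow>
     (\<forall>p\<in>neural_ring D. \<phi> p \<in> neural_ring C) \<and>
     (\<forall>p\<in>neural_ring D. \<forall>q\<in>neural_ring D. \<phi> (\<lambda>c. p c + q c) = (\<lambda>c. \<phi> p c + \<phi> q c)) \<and>
     (\<forall>p\<in>neural_ring D. \<forall>q\<in>neural_ring D. \<phi> (\<lambda>c. p c * q c) = (\<lambda>c. \<phi> p c * \<phi> q c)) \<and>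
     \<phi> (nr_one D) = nr_one C"

definition monomial_map :: "nat set set \<Rightarrow> nat set set \<Rightarrow> ((nat set \<Rightarrow> bit) \<Rightarrow> (nat set \<Rightarrow> bit)) \<Rightarrow> bool" where
  "monomial_map D C \<phi> \<longleftrightarrow> ring_hom_nr D C \<phi> \<and>
     (\<forall>p. is_monomial D p \<longrightarrow> \<phi> p = (\<lambda>c. 0) \<or> is_monomial C (\<phi> p))"

definition pullback :: "nat set set \<Rightarrow> (nat set \<Rightarrow> nat set) \<Rightarrow> (nat set \<Rightarrow> bit) \<Rightarrow> (nat set \<Rightarrow> bit)" where
  "pullback C f p = (\<lambda>c. if c \<in> C then p (f c) else 0)"

end

theory Submission
  imports Defs
begin

lemma bit01: "(x::bit) = 0 \<or> x = 1" by (cases x) auto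

lemma prod_coord:
  assumes "finite \<sigma>" "c \<in> C"
  shows "(\<Prod>i\<in>\<sigma>. coord C i c) = (if \<sigma> \<subseteq> c then 1 else 0)"
  using assms(1)
proof (induction rule: finite_induct)
  case empty then show ?case by simp
next
  case (insert i S)
  then show ?case using assms(2) by (simp add: coord_def del: mult_bit_eq_and)
qed

lemma monomial_eq:
  assumes "finite \<sigma>"
  shows "monomial C \<sigma> = (\<lambda>c. if c \<in> C \<and> \<sigma> \<subseteq> c then 1 else 0)"
  using prod_coord[OF assms] by (auto simp: monomial_def fun_eq_iff)

lemma code_finite: "is_code C \<Longrightarrow> finite C"
  unfolding is_code_def
proof (elim exE)
  fix n assume "\<forall>c\<in>C. c \<subseteq> {1..n}"
  then have "C \<subseteq> Pow {1..n}" by auto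
  then show "finite C" using finite_subset by blast
qed

lemma code_ge1: assumes "is_code C" "c \<in> C" "i \<in> c" shows "1 \<le> i"
proof -
  obtain n where "\<forall>c\<in>C. c \<subseteq> {1..n}" using assms(1) unfolding is_code_def by blast
  then have "i \<in> {1..n}" using assms(2,3) by blast
  then show ?thesis by simp
qed

lemma part1:
  assumes C: "is_code C" and D: "is_code D" and f: "code_morphism C D f"
  shows "monomial_map D C (pullback C f)"
proof -
  have fD: "\<And>c. c \<in> C \<Longrightarrow> f c \<in> D" using f by (simp add: code_morphism_def)
  have rh: "ring_hom_nr D C (pullback C f)"
    unfolding ring_hom_nr_def
  proof (intro conjI ballI)
    show "pullback C f p \<in> neural_ring C" for p by (simp add: pullback_def neural_ring_def)
    show "pullback C f (\<lambda>c. p c + q c) = (\<lambda>c. pullback C f p c + pullback C f q c)" for p q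
      by (rule ext) (simp add: pullback_def del: add_bit_eq_xor)
    show "pullback C f (\<lambda>c. p c * q c) = (\<lambda>c. pullback C f p c * pullback C f q c)" for p q
      by (rule ext) (simp add: pullback_def del: mult_bit_eq_and)
    show "pullback C f (nr_one D) = nr_one C"
      by (rule ext) (simp add: pullback_def nr_one_def fD)
  qed
  moreover have "\<phi> = (\<lambda>c. 0) \<or> is_monomial C \<phi>"
    if "is_monomial D p" and "\<phi> = pullback C f p" for p \<phi>
  proof -
    from that(1) obtain \<sigma> where s0: "finite \<sigma> \<and> p = monomial D \<sigma>"
      unfolding is_monomial_def by blast
    then have s: "finite \<sigma>" "p = monomial D \<sigma>" by simp_all
    have tr: "is_trunk D (Tk D \<sigma>)" using s by (auto simp: is_trunk_def)
    let ?P = "{c \<in> C. f c \<in> Tk D \<sigma>}"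
    have phi: "\<phi> = (\<lambda>c. if c \<in> ?P then 1 else 0)"
      using that(2) s fD by (auto simp: pullback_def monomial_eq Tk_def fun_eq_iff)
    have "is_trunk C ?P" using f tr by (simp add: code_morphism_def)
    then have disj: "?P = {} \<or> (\<exists>\<tau>. finite \<tau> \<and> ?P = Tk C \<tau>)" unfolding is_trunk_def .
    show ?thesis
    proof (cases "?P = {}")
      case True
      have "\<phi> = (\<lambda>c. 0)" unfolding phi True by simp
      then show ?thesis by (rule disjI1)
    next
      case False
      then obtain \<tau> where 2: "finite \<tau>" "?P = Tk C \<tau>" "?P \<noteq> {}" using disj by iprover
      then obtain c where c: "c \<in> Tk C \<tau>" by auto
      have "\<forall>i\<in>\<tau>. 1 \<le> i" using c code_ge1[OF C] by (auto simp: Tk_def)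
      moreover have "\<phi> = monomial C \<tau>"
      proof -
        have "\<phi> = (\<lambda>c. if c \<in> Tk C \<tau> then 1 else 0)" using phi 2(2) by metis
        then show ?thesis by (simp add: monomial_eq[OF 2(1)] Tk_def)
      qed
      ultimately show ?thesis using 2 by (auto simp: is_monomial_def)
    qed
  qed
  ultimately show ?thesis by (auto simp: monomial_map_def)
qed

lemma part5:
  assumes C: "is_code C" and D: "is_code D" and m: "monomial_map D C \<phi>"
  shows "\<exists>f. code_morphism C D f \<and> (\<forall>p\<in>neural_ring D. \<phi> p = pullback C f p)"
proof -
  have rh: "ring_hom_nr D C \<phi>" using m by (simp add: monomial_map_def)
  have mem: "\<And>p. p \<in> neural_ring D \<Longrightarrow> \<phi> p \<in> neural_ring C"
    and add: "\<And>p q. p \<in> neural_ring D \<Longrightarrow> q \<in> neural_ring D \<Longrightarrow> \<phi> (\<lambda>c. p c + q c) = (\<lambda>c. \<phi> p c + \<phi> q c)"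
    and mul: "\<And>p q. p \<in> neural_ring D \<Longrightarrow> q \<in> neural_ring D \<Longrightarrow> \<phi> (\<lambda>c. p c * q c) = (\<lambda>c. \<phi> p c * \<phi> q c)"
    and one: "\<phi> (nr_one D) = nr_one C"
    using rh unfolding ring_hom_nr_def by blast+
  have z: "(\<lambda>c. 0::bit) \<in> neural_ring D" by (simp add: neural_ring_def)
  have phi0: "\<phi> (\<lambda>c. 0) = (\<lambda>c. 0)"
  proof -
    have "\<phi> (\<lambda>c. 0 + 0) = (\<lambda>c. \<phi> (\<lambda>c. 0) c + \<phi> (\<lambda>c. 0) c)" using add[OF z z] .
    then have "\<phi> (\<lambda>c. 0) = (\<lambda>c. \<phi> (\<lambda>c. 0) c + \<phi> (\<lambda>c. 0) c)" by simp
    moreover have "\<And>x::bit. x + x = 0" using bit01 by fastforce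
    ultimately show ?thesis by (metis (no_types))
  qed
  define e where "e d = (\<lambda>x::nat set. if x = d then (1::bit) else 0)" for d
  have eR: "d \<in> D \<Longrightarrow> e d \<in> neural_ring D" for d by (auto simp: e_def neural_ring_def)
  have finD: "finite D" using code_finite[OF D] .
  have ex: "\<exists>d\<in>D. \<phi> (e d) c = 1" if c: "c \<in> C" for c
  proof (rule ccontr)
    assume "\<not> ?thesis"
    then have all0: "\<forall>d\<in>D. \<phi> (e d) c = 0" by auto
    have "S \<subseteq> D \<Longrightarrow> \<phi> (\<lambda>x. if x \<in> S then 1 else 0) c = 0" for S
      using finite_subset[OF _ finD]
    proof -
      assume S: "S \<subseteq> D"
      have "finite S" using S finD finite_subset by blast
      then show ?thesis using S
      proof (induction rule: finite_induct)
        case empty then show ?case using phi0 by simp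
      next
        case (insert d S)
        have R1: "(\<lambda>x. if x \<in> S then 1 else 0::bit) \<in> neural_ring D"
          using insert by (auto simp: neural_ring_def)
        have eq: "(\<lambda>x. if x \<in> insert d S then 1 else 0::bit) = (\<lambda>x. (if x \<in> S then 1 else 0) + e d x)"
          using insert(2) by (auto simp: e_def fun_eq_iff)
        have "\<phi> (\<lambda>x. if x \<in> insert d S then 1 else 0) c = \<phi> (\<lambda>x. if x \<in> S then 1 else 0) c + \<phi> (e d) c"
        proof -
          have dD: "d \<in> D" using insert by auto
          have "\<phi> (\<lambda>x. if x \<in> insert d S then 1 else 0) c = \<phi> (\<lambda>x. (if x \<in> S then 1 else 0) + e d x) c"
            by (simp only: eq)
          also have "\<dots> = \<phi> (\<lambda>x. if x \<in> S then 1 else 0) c + \<phi> (e d) c"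
            by (simp only: add[OF R1 eR[OF dD]])
          finally show ?thesis .
        qed
        then show ?case using insert all0 by (simp del: add_bit_eq_xor)
      qed
    qed
    from this[of D] have "\<phi> (nr_one D) c = 0" by (simp add: nr_one_def)
    then show False using one c by (simp add: nr_one_def)
  qed
  define f where "f c = (SOME d. d \<in> D \<and> \<phi> (e d) c = 1)" for c
  have fD: "c \<in> C \<Longrightarrow> f c \<in> D \<and> \<phi> (e (f c)) c = 1" for c
    unfolding f_def using ex[of c] by (metis (mono_tags, lifting) someI)
  have main: "\<phi> p c = pullback C f p c" if p: "p \<in> neural_ring D" for p c
  proof (cases "c \<in> C")
    case False
    then show ?thesis using mem[OF p] by (simp add: neural_ring_def pullback_def)
  next
    case True
    let ?d = "f c"
    have d: "?d \<in> D" "\<phi> (e ?d) c = 1" using fD[OF True] by auto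
    have "\<phi> p c = \<phi> p c * \<phi> (e ?d) c" using d by simp
    also have "\<dots> = \<phi> (\<lambda>x. p x * e ?d x) c" using mul[OF p eR[OF d(1)]] by simp
    also have "(\<lambda>x. p x * e ?d x) = (if p ?d = 1 then e ?d else (\<lambda>x. 0))"
      using bit01[of "p ?d"] by (auto simp: e_def fun_eq_iff)
    finally show ?thesis using d phi0 True bit01[of "p ?d"]
      by (auto simp: pullback_def split: if_splits)
  qed
  have morph: "code_morphism C D f"
    unfolding code_morphism_def
  proof (intro conjI allI impI ballI)
    show "c \<in> C \<Longrightarrow> f c \<in> D" for c using fD by blast
  next
    fix T assume T: "is_trunk D T"
    show "is_trunk C {c \<in> C. f c \<in> T}"
    proof (cases "T = {}")
      case True then show ?thesis by (simp add: is_trunk_def)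
    next
      case False
      then obtain \<sigma> where s: "finite \<sigma>" "T = Tk D \<sigma>" using T by (auto simp: is_trunk_def)
      show ?thesis
      proof (cases "\<forall>i\<in>\<sigma>. 1 \<le> i")
        case False
        then have "T = {}" using s code_ge1[OF D] by (fastforce simp: Tk_def)
        then show ?thesis by (simp add: is_trunk_def)
      next
        case True
        have qm: "is_monomial D (monomial D \<sigma>)" using s True by (auto simp: is_monomial_def)
        have qR: "monomial D \<sigma> \<in> neural_ring D" by (auto simp: monomial_def neural_ring_def)
        let ?P = "{c \<in> C. f c \<in> T}"
        have phq: "\<phi> (monomial D \<sigma>) = (\<lambda>c. if c \<in> ?P then 1 else 0)"
          using main[OF qR] fD s by (auto simp: pullback_def monomial_eq Tk_def fun_eq_iff)
        from m qm have "\<phi> (monomial D \<sigma>) = (\<lambda>c. 0) \<or> is_monomial C (\<phi> (monomial D \<sigma>))"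
          by (simp add: monomial_map_def)
        then show ?thesis
        proof
          assume "\<phi> (monomial D \<sigma>) = (\<lambda>c. 0)"
          then have "?P = {}" using phq by (auto simp: fun_eq_iff split: if_splits)
          then show ?thesis by (simp add: is_trunk_def)
        next
          assume "is_monomial C (\<phi> (monomial D \<sigma>))"
          then obtain \<tau> where t: "finite \<tau>" "\<phi> (monomial D \<sigma>) = monomial C \<tau>"
            by (auto simp: is_monomial_def)
          have "?P = Tk C \<tau>"
          proof -
            have "(c \<in> ?P) = (c \<in> C \<and> \<tau> \<subseteq> c)" for c
            proof -
              have "(if c \<in> ?P then 1 else 0) = (if c \<in> C \<and> \<tau> \<subseteq> c then (1::bit) else 0)"
                using fun_cong[OF trans[OF phq[symmetric] t(2)], of c] unfolding monomial_eq[OF t(1)] .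
              then show ?thesis by (auto split: if_splits)
            qed
            then show ?thesis by (auto simp: Tk_def)
          qed
          then show ?thesis using t by (auto simp: is_trunk_def)
        qed
      qed
    qed
  qed
  show ?thesis using morph main by blast
qed

theorem theorem1p4:
  shows
    \<comment> \<open>well-defined on morphisms: f^* is a monomial map R_D -> R_C\<close>
    "(\<forall>C D f. is_code C \<and> is_code D \<and> code_morphism C D f \<longrightarrow>
         monomial_map D C (pullback C f))
   \<comment> \<open>preserves identities\<close>
   \<and> (\<forall>C. is_code C \<longrightarrow> (\<forall>p\<in>neural_ring C. pullback C id p = p))
   \<comment> \<open>contravariant functoriality\<close>
   \<and> (\<forall>C D E f g. is_code C \<and> is_code D \<and> is_code E \<and>
         code_morphism C D f \<and> code_morphism D E g \<longrightarrow>
         (\<forall>p\<in>neural_ring E. pullback C (g \<circ> f) p = pullback C f (pullback D g p)))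
   \<comment> \<open>faithful\<close>
   \<and> (\<forall>C D f g. is_code C \<and> is_code D \<and> code_morphism C D f \<and> code_morphism C D g \<and>
         (\<forall>p\<in>neural_ring D. pullback C f p = pullback C g p) \<longrightarrow> (\<forall>c\<in>C. f c = g c))
   \<comment> \<open>full\<close>
   \<and> (\<forall>C D \<phi>. is_code C \<and> is_code D \<and> monomial_map D C \<phi> \<longrightarrow>
         (\<exists>f. code_morphism C D f \<and> (\<forall>p\<in>neural_ring D. \<phi> p = pullback C f p)))"
proof (intro conjI allI impI ballI)
  show "monomial_map D C (pullback C f)" if "is_code C \<and> is_code D \<and> code_morphism C D f" for C D f
    using part1 that by blast
next
  show "pullback C id p = p" if "p \<in> neural_ring C" for C p
    using that by (auto simp: pullback_def neural_ring_def fun_eq_iff)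
next
  show "pullback C (g \<circ> f) p = pullback C f (pullback D g p)"
    if "is_code C \<and> is_code D \<and> is_code E \<and> code_morphism C D f \<and> code_morphism D E g" for C D E f g p
    using that by (auto simp: pullback_def code_morphism_def fun_eq_iff)
next
  fix C D f g c
  assume a: "is_code C \<and> is_code D \<and> code_morphism C D f \<and> code_morphism C D g \<and>
         (\<forall>p\<in>neural_ring D. pullback C f p = pullback C g p)" and c: "c \<in> C"
  let ?p = "\<lambda>x. if x = f c then (1::bit) else 0"
  have "f c \<in> D" using a c by (simp add: code_morphism_def)
  then have "?p \<in> neural_ring D" by (auto simp: neural_ring_def)
  then have "pullback C f ?p c = pullback C g ?p c" using a by simp
  then show "f c = g c" using c by (auto simp: pullback_def split: if_splits)
next
  show "\<exists>f. code_morphism C D f \<and> (\<forall>p\<in>neural_ring D. \<phi> p = pullback C f p)"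
    if "is_code C \<and> is_code D \<and> monomial_map D C \<phi>" for C D \<phi>
    using part5 that by blast
qed

end
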